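(* Let $k$ be a field, $n\ge1$, and let $Q_H$ be the quiver with vertices $x_1,\ldots,x_{n+1},y_1,\ldots,y_n$ and arrows $r_i:x_i\to y_i$, $l_i:y_i\to x_{i+1}$, $a_i:x_i\to x_{i+1}$ ($i=1,\ldots,n$); put $A_i=r_il_i$. Let $1=c_1<c_2<\cdots<c_{s+1}=n+1$ with $n_k:=c_{k+1}-c_k\ge2$ for all $k=1,\ldots,s$. For $1\le k\le s$ and $1\le i\le n_k$ write $a^k_i=a_{c_k+i-1}$, $A^k_i=A_{c_k+i-1}$ and $W^k=a^k_1\cdots a^k_{n_k}+A^k_1\cdots A^k_{n_k}$. Let $\varphi^k_i:kQ_H\to kQ_H$ be the algebra automorphism with $\varphi^k_i(a^k_i)=a^k_i+A^k_i$ and fixing all other arrows and all stationary paths; let $\bar\gamma^k=\varphi^k_{n_k}\circ\cdots\circ\varphi^k_1$ and $\bar\gamma=\bar\gamma^s\circ\cdots\circ\bar\gamma^1$. Then for each $k$, $$\bar\gamma(W^k)=a^k_1\cdots a^k_{n_k}+\sum_{i=1}^{n_k}a^k_1\cdots a^k_{i-1}A^k_ia^k_{i+1}\cdots a^k_{n_k}+\Gamma_k,$$ where $\Gamma_k$ is a sum of terms each of which is a scalar multiple of a path containing at least two of the factors $A^k_1,\ldots,A^k_{n_k}$.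
   Context: $kQ_H$ is the path algebra of $Q_H$ over $k$; an expression like $a^k_1\cdots A^k_i\cdots a^k_{n_k}$ denotes the path obtained by concatenation. *)

theory Defs
  imports Main "HOL-Library.Sublist"
begin

datatype vert = VX nat | VY nat

datatype arr = ArrR nat | ArrL nat | ArrA nat

fun arr_idx :: "arr \<Rightarrow> nat" where
  "arr_idx (ArrR i) = i" | "arr_idx (ArrL i) = i" | "arr_idx (ArrA i) = i"

fun src :: "arr \<Rightarrow> vert" where
  "src (ArrR i) = VX i" | "src (ArrL i) = VY i" | "src (ArrA i) = VX i"

fun tgt :: "arr \<Rightarrow> vert" where
  "tgt (ArrR i) = VY i" | "tgt (ArrL i) = VX (Suc i)" | "tgt (ArrA i) = VX (Suc i)"

fun is_vert :: "nat \<Rightarrow> vert \<Rightarrow> bool" where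
  "is_vert n (VX i) = (1 \<le> i \<and> i \<le> n + 1)"
| "is_vert n (VY i) = (1 \<le> i \<and> i \<le> n)"

definition is_arr :: "nat \<Rightarrow> arr \<Rightarrow> bool" where
  "is_arr n a = (1 \<le> arr_idx a \<and> arr_idx a \<le> n)"

text \<open>A path is a start vertex together with a list of arrows, composed left to right
  (so the path r_i l_i first traverses r_i, then l_i). The empty list gives the
  stationary path at the vertex.\<close>
type_synonym path = "vert \<times> arr list"

fun chain :: "nat \<Rightarrow> vert \<Rightarrow> arr list \<Rightarrow> bool" where
  "chain n v [] = True"
| "chain n v (a # as) = (is_arr n a \<and> src a = v \<and> chain n (tgt a) as)"

definition valid_path :: "nat \<Rightarrow> path \<Rightarrow> bool" where
  "valid_path n p = (is_vert n (fst p) \<and> chain n (fst p) (snd p))"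

definition pend :: "path \<Rightarrow> vert" where
  "pend p = (if snd p = [] then fst p else tgt (last (snd p)))"

type_synonym 'k palg = "path \<Rightarrow> 'k"

definition supp :: "'k::zero palg \<Rightarrow> path set" where
  "supp f = {p. f p \<noteq> 0}"

definition path_algebra :: "nat \<Rightarrow> ('k::zero palg) set" where
  "path_algebra n = {f. finite (supp f) \<and> (\<forall>p. f p \<noteq> 0 \<longrightarrow> valid_path n p)}"

definition basis :: "path \<Rightarrow> 'k::{zero,one} palg" where
  "basis p = (\<lambda>q. if q = p then 1 else 0)"

definition padd :: "'k::plus palg \<Rightarrow> 'k palg \<Rightarrow> 'k palg" where
  "padd f g = (\<lambda>q. f q + g q)"

definition psum :: "('i \<Rightarrow> 'k::comm_monoid_add palg) \<Rightarrow> 'i set \<Rightarrow> 'k palg" where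
  "psum F I = (\<lambda>q. \<Sum>i\<in>I. F i q)"

definition pmult :: "'k::comm_semiring_1 palg \<Rightarrow> 'k palg \<Rightarrow> 'k palg" where
  "pmult f g = (\<lambda>q. \<Sum>x\<in>{(p1, p2). f p1 \<noteq> 0 \<and> g p2 \<noteq> 0 \<and> pend p1 = fst p2
                              \<and> q = (fst p1, snd p1 @ snd p2)}. f (fst x) * g (snd x))"

fun img_path :: "(arr \<Rightarrow> 'k::comm_semiring_1 palg) \<Rightarrow> vert \<Rightarrow> arr list \<Rightarrow> 'k palg" where
  "img_path \<sigma> v [] = basis (v, [])"
| "img_path \<sigma> v (a # as) = pmult (\<sigma> a) (img_path \<sigma> (tgt a) as)"

definition alg_ext :: "(arr \<Rightarrow> 'k::comm_semiring_1 palg) \<Rightarrow> 'k palg \<Rightarrow> 'k palg" where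
  "alg_ext \<sigma> f = (\<lambda>q. \<Sum>p\<in>supp f. f p * img_path \<sigma> (fst p) (snd p) q)"

definition arrow_elem :: "arr \<Rightarrow> 'k::{zero,one} palg" where
  "arrow_elem a = basis (src a, [a])"

definition A_elem :: "nat \<Rightarrow> 'k::{zero,one} palg" where
  "A_elem j = basis (VX j, [ArrR j, ArrL j])"

definition phi :: "(nat \<Rightarrow> nat) \<Rightarrow> nat \<Rightarrow> nat \<Rightarrow> 'k::comm_semiring_1 palg \<Rightarrow> 'k palg" where
  "phi c k i = alg_ext (\<lambda>a. if a = ArrA (c k + i - 1)
                             then padd (arrow_elem a) (A_elem (c k + i - 1))
                             else arrow_elem a)"

definition nblk :: "(nat \<Rightarrow> nat) \<Rightarrow> nat \<Rightarrow> nat" where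
  "nblk c k = c (Suc k) - c k"

definition gamma_blk :: "(nat \<Rightarrow> nat) \<Rightarrow> nat \<Rightarrow> 'k::comm_semiring_1 palg \<Rightarrow> 'k palg" where
  "gamma_blk c k = fold (\<lambda>i g. phi c k i \<circ> g) [1..<Suc (nblk c k)] id"

definition gamma_bar :: "(nat \<Rightarrow> nat) \<Rightarrow> nat \<Rightarrow> 'k::comm_semiring_1 palg \<Rightarrow> 'k palg" where
  "gamma_bar c s = fold (\<lambda>k g. gamma_blk c k \<circ> g) [1..<Suc s] id"

definition blk_arrows :: "(nat \<Rightarrow> nat) \<Rightarrow> nat \<Rightarrow> (nat \<Rightarrow> bool) \<Rightarrow> arr list" where
  "blk_arrows c k R = concat (map (\<lambda>j. if R (j + 1 - c k) then [ArrR j, ArrL j] else [ArrA j])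
                                  [c k..<c (Suc k)])"

definition a_word :: "(nat \<Rightarrow> nat) \<Rightarrow> nat \<Rightarrow> 'k::{zero,one} palg" where
  "a_word c k = basis (VX (c k), blk_arrows c k (\<lambda>i. False))"

definition A_word :: "(nat \<Rightarrow> nat) \<Rightarrow> nat \<Rightarrow> 'k::{zero,one} palg" where
  "A_word c k = basis (VX (c k), blk_arrows c k (\<lambda>i. True))"

definition mixed_word :: "(nat \<Rightarrow> nat) \<Rightarrow> nat \<Rightarrow> nat \<Rightarrow> 'k::{zero,one} palg" where
  "mixed_word c k i = basis (VX (c k), blk_arrows c k (\<lambda>m. m = i))"

definition W :: "(nat \<Rightarrow> nat) \<Rightarrow> nat \<Rightarrow> 'k::{plus,zero,one} palg" where
  "W c k = padd (a_word c k) (A_word c k)"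

definition num_A_factors :: "(nat \<Rightarrow> nat) \<Rightarrow> nat \<Rightarrow> path \<Rightarrow> nat" where
  "num_A_factors c k p =
     card {i \<in> {1..nblk c k}. sublist [ArrR (c k + i - 1), ArrL (c k + i - 1)] (snd p)}"

end

theory Submission
  imports Defs
begin


lemma supp_basis[simp]: "supp (basis p :: 'k::field palg) = {p}"
  by (auto simp: supp_def basis_def)

lemma supp_padd: "supp (padd f g :: 'k::comm_monoid_add palg) \<subseteq> supp f \<union> supp g"
  by (auto simp: supp_def padd_def)

lemma finite_supp_padd[simp]: "finite (supp f) \<Longrightarrow> finite (supp g) \<Longrightarrow> finite (supp (padd f g :: 'k::comm_monoid_add palg))"
  by (meson finite_UnI finite_subset supp_padd)

lemma supp_psum: "supp (psum F I) \<subseteq> (\<Union>i\<in>I. supp (F i))"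
  unfolding supp_def psum_def using sum.neutral by force

lemma alg_ext_sup:
  assumes "finite S" "supp f \<subseteq> S"
  shows "alg_ext \<sigma> f = (\<lambda>q. \<Sum>p\<in>S. f p * img_path \<sigma> (fst p) (snd p) q)"
  unfolding alg_ext_def
  apply (rule ext)
  apply (rule sum.mono_neutral_left[OF assms(1) assms(2)])
  by (auto simp: supp_def)

lemma alg_ext_basis: "alg_ext \<sigma> (basis p :: 'k::field palg) = img_path \<sigma> (fst p) (snd p)"
  unfolding alg_ext_def supp_basis by (simp add: basis_def)

lemma alg_ext_psum:
  assumes "finite I" "\<forall>i\<in>I. finite (supp (F i))"
  shows "alg_ext \<sigma> (psum F I) = psum (\<lambda>i. alg_ext \<sigma> (F i)) I"
proof -
  define S where "S = (\<Union>i\<in>I. supp (F i))"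
  have fS: "finite S" using assms by (simp add: S_def)
  have "alg_ext \<sigma> (psum F I) = (\<lambda>q. \<Sum>p\<in>S. psum F I p * img_path \<sigma> (fst p) (snd p) q)"
    by (rule alg_ext_sup[OF fS]) (use supp_psum S_def in auto)
  also have "\<dots> = (\<lambda>q. \<Sum>i\<in>I. \<Sum>p\<in>S. F i p * img_path \<sigma> (fst p) (snd p) q)"
    by (simp add: psum_def sum_distrib_right sum.swap[of _ S I])
  also have "\<dots> = psum (\<lambda>i. alg_ext \<sigma> (F i)) I"
  proof -
    have "\<And>i. i \<in> I \<Longrightarrow> alg_ext \<sigma> (F i) = (\<lambda>q. \<Sum>p\<in>S. F i p * img_path \<sigma> (fst p) (snd p) q)"
      by (rule alg_ext_sup[OF fS]) (auto simp: S_def)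
    then show ?thesis unfolding psum_def by (auto intro!: ext sum.cong)
  qed
  finally show ?thesis .
qed

lemma alg_ext_padd:
  assumes "finite (supp f)" "finite (supp g)"
  shows "alg_ext \<sigma> (padd f g) = padd (alg_ext \<sigma> f) (alg_ext \<sigma> g)"
proof -
  define S where "S = supp f \<union> supp g"
  have fS: "finite S" using assms by (simp add: S_def)
  have 1: "alg_ext \<sigma> (padd f g) = (\<lambda>q. \<Sum>p\<in>S. padd f g p * img_path \<sigma> (fst p) (snd p) q)"
    by (rule alg_ext_sup[OF fS]) (use supp_padd S_def in auto)
  have 2: "alg_ext \<sigma> f = (\<lambda>q. \<Sum>p\<in>S. f p * img_path \<sigma> (fst p) (snd p) q)"
    by (rule alg_ext_sup[OF fS]) (auto simp: S_def)
  have 3: "alg_ext \<sigma> g = (\<lambda>q. \<Sum>p\<in>S. g p * img_path \<sigma> (fst p) (snd p) q)"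
    by (rule alg_ext_sup[OF fS]) (auto simp: S_def)
  show ?thesis unfolding 1 2 3 by (simp add: padd_def distrib_right sum.distrib)
qed

lemma pmult_sup:
  assumes "finite S1" "supp f \<subseteq> S1" "finite S2" "supp g \<subseteq> S2"
  shows "pmult f g q = (\<Sum>x\<in>{(p1,p2). p1\<in>S1 \<and> p2\<in>S2 \<and> pend p1 = fst p2 \<and> q = (fst p1, snd p1 @ snd p2)}. f (fst x) * g (snd x))"
  unfolding pmult_def
proof (rule sum.mono_neutral_left)
  show "finite {(p1,p2). p1\<in>S1 \<and> p2\<in>S2 \<and> pend p1 = fst p2 \<and> q = (fst p1, snd p1 @ snd p2)}"
    by (rule finite_subset[of _ "S1 \<times> S2"]) (use assms in auto)
qed (use assms in \<open>auto simp: supp_def\<close>)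

lemma pmult_basis: "pmult (basis p1) (basis p2 :: 'k::field palg) =
   (if pend p1 = fst p2 then basis (fst p1, snd p1 @ snd p2) else (\<lambda>q. 0))"
proof (rule ext)
  fix q
  have e: "{(x,y). x\<in>{p1} \<and> y\<in>{p2} \<and> pend x = fst y \<and> q = (fst x, snd x @ snd y)} =
     (if pend p1 = fst p2 \<and> q = (fst p1, snd p1 @ snd p2) then {(p1,p2)} else {})" by auto
  have "pmult (basis p1) (basis p2 :: 'k::field palg) q = (\<Sum>x\<in>{(x,y). x\<in>{p1} \<and> y\<in>{p2} \<and> pend x = fst y \<and> q = (fst x, snd x @ snd y)}. basis p1 (fst x) * (basis p2 (snd x) :: 'k))"
    by (rule pmult_sup) auto
    then show "pmult (basis p1) (basis p2 :: 'k::field palg) q =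
   (if pend p1 = fst p2 then basis (fst p1, snd p1 @ snd p2) else (\<lambda>q. 0)) q"
    unfolding e by (auto simp: basis_def)
qed

lemma pmult_padd_left:
  assumes "finite (supp f)" "finite (supp g)" "finite (supp h)"
  shows "pmult (padd f g) h = padd (pmult f h) (pmult g h)"
proof (rule ext)
  fix q
  define S where "S = supp f \<union> supp g"
  have fS: "finite S" using assms by (simp add: S_def)
  show "pmult (padd f g) h q = padd (pmult f h) (pmult g h) q"
    unfolding padd_def
    apply (subst pmult_sup[OF fS _ assms(3) subset_refl])
     apply (use supp_padd S_def in \<open>auto simp: padd_def\<close>)[1]
    apply (subst pmult_sup[OF fS _ assms(3) subset_refl], simp add: S_def)
    apply (subst pmult_sup[OF fS _ assms(3) subset_refl], simp add: S_def)
    by (simp add: distrib_right sum.distrib)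
qed

lemma pmult_padd_right:
  assumes "finite (supp f)" "finite (supp g)" "finite (supp h)"
  shows "pmult h (padd f g) = padd (pmult h f) (pmult h g)"
proof (rule ext)
  fix q
  define S where "S = supp f \<union> supp g"
  have fS: "finite S" using assms by (simp add: S_def)
  show "pmult h (padd f g) q = padd (pmult h f) (pmult h g) q"
    unfolding padd_def
    apply (subst pmult_sup[OF assms(3) subset_refl fS])
     apply (use supp_padd S_def in \<open>auto simp: padd_def\<close>)[1]
    apply (subst pmult_sup[OF assms(3) subset_refl fS], simp add: S_def)
    apply (subst pmult_sup[OF assms(3) subset_refl fS], simp add: S_def)
    by (simp add: distrib_left sum.distrib)
qed

lemma img_id:
  "chain n v as \<Longrightarrow> (\<forall>a\<in>set as. \<sigma> a = arrow_elem a) \<Longrightarrow> img_path \<sigma> v as = (basis (v, as) :: 'k::field palg)"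
proof (induction as arbitrary: v)
  case Nil then show ?case by simp
next
  case (Cons a as)
  then have "img_path \<sigma> (tgt a) as = (basis (tgt a, as) :: 'k palg)" by simp
  then show ?case using Cons.prems by (simp add: arrow_elem_def pmult_basis pend_def)
qed

lemma img_step:
  assumes "\<forall>a. a \<noteq> ArrA j \<longrightarrow> \<sigma> a = arrow_elem a" "\<sigma> (ArrA j) = padd (arrow_elem (ArrA j)) (A_elem j)"
  shows "chain n v (pre @ ArrA j # post) \<Longrightarrow> ArrA j \<notin> set pre \<Longrightarrow> ArrA j \<notin> set post \<Longrightarrow>
     img_path \<sigma> v (pre @ ArrA j # post) =
       (padd (basis (v, pre @ ArrA j # post)) (basis (v, pre @ ArrR j # ArrL j # post)) :: 'k::field palg)"
proof (induction pre arbitrary: v)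
  case Nil
  have v: "v = VX j" using Nil by simp
  have post: "img_path \<sigma> (VX (Suc j)) post = (basis (VX (Suc j), post) :: 'k palg)"
    by (rule img_id[of n]) (use Nil assms in \<open>auto; metis\<close>)+
  show ?case using v post assms(2)
    by (simp add: arrow_elem_def A_elem_def pmult_padd_left pmult_basis pend_def)
next
  case (Cons b pre)
  have IH: "img_path \<sigma> (tgt b) (pre @ ArrA j # post) =
       (padd (basis (tgt b, pre @ ArrA j # post)) (basis (tgt b, pre @ ArrR j # ArrL j # post)) :: 'k palg)"
    using Cons by simp
  have "\<sigma> b = arrow_elem b" using Cons.prems assms(1) by auto
  then show ?case using IH Cons.prems
    by (simp add: arrow_elem_def pmult_padd_right pmult_basis pend_def)
qed




definition gk :: "(nat \<Rightarrow> nat) \<Rightarrow> nat \<Rightarrow> (nat \<Rightarrow> bool) \<Rightarrow> nat \<Rightarrow> arr list" where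
  "gk c k P j = (if P (j + 1 - c k) then [ArrR j, ArrL j] else [ArrA j])"

definition Pk :: "(nat \<Rightarrow> nat) \<Rightarrow> nat \<Rightarrow> nat set \<Rightarrow> path" where
  "Pk c k R = (VX (c k), blk_arrows c k (\<lambda>m. m \<in> R))"

definition FF :: "(nat \<Rightarrow> nat) \<Rightarrow> nat \<Rightarrow> nat set set \<Rightarrow> 'k::field palg" where
  "FF c k I = padd (psum (\<lambda>R. basis (Pk c k R)) I) (A_word c k)"

lemma blk_gk: "blk_arrows c k P = concat (map (gk c k P) [c k..<c (Suc k)])"
  unfolding blk_arrows_def gk_def by simp

lemma chain_gk: "1 \<le> a \<Longrightarrow> a + d \<le> n + 1 \<Longrightarrow> chain n (VX a) (concat (map (gk c k P) [a..<a+d]))"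
proof (induction d arbitrary: a)
  case 0 then show ?case by simp
next
  case (Suc d)
  have u: "[a..<a + Suc d] = a # [Suc a..<Suc a + d]" by (simp add: upt_conv_Cons)
  have "chain n (VX (Suc a)) (concat (map (gk c k P) [Suc a..<Suc a+d]))"
    by (rule Suc.IH) (use Suc.prems in auto)
  moreover have "gk c k P a = [ArrR a, ArrL a] \<or> gk c k P a = [ArrA a]" by (simp add: gk_def)
  ultimately show ?case using Suc.prems unfolding u by (auto simp: is_arr_def simp del: upt_Suc)
qed

lemma chain_blk: "1 \<le> c k \<Longrightarrow> c k \<le> c (Suc k) \<Longrightarrow> c (Suc k) \<le> n + 1 \<Longrightarrow>
   chain n (VX (c k)) (blk_arrows c k P)"
  using chain_gk[of "c k" "c (Suc k) - c k" n c k P] by (simp add: blk_gk)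

lemma set_gk: "x \<in> set (concat (map (gk c k P) L)) \<Longrightarrow>
   \<exists>j\<in>set L. (x = ArrR j \<or> x = ArrL j \<or> (x = ArrA j \<and> \<not> P (j + 1 - c k)))"
  by (auto simp: gk_def split: if_splits)

lemma blk_split:
  assumes "1 \<le> i" "i \<le> nblk c k"
  shows "blk_arrows c k P = concat (map (gk c k P) [c k..<c k + i - 1]) @
     (if P i then [ArrR (c k + i - 1), ArrL (c k + i - 1)] else [ArrA (c k + i - 1)]) @
     concat (map (gk c k P) [c k + i..<c (Suc k)])"
proof -
  have lt: "c k + i - 1 < c (Suc k)" using assms by (simp add: nblk_def)
  have "[c k..<c (Suc k)] = [c k..<c k + i - 1] @ [c k + i - 1..<c (Suc k)]"
    using upt_add_eq_append[of "c k" "c k + i - 1" "c (Suc k) - (c k + i - 1)"] lt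
    by (metis le_add1 le_add_diff_inverse less_or_eq_imp_le add_diff_assoc[OF assms(1)])
  also have "[c k + i - 1..<c (Suc k)] = (c k + i - 1) # [c k + i..<c (Suc k)]"
    using lt assms(1) by (simp add: upt_conv_Cons)
  finally show ?thesis using assms(1) by (simp add: blk_gk gk_def)
qed

lemma phi_fix_basis:
  "chain n v as \<Longrightarrow> ArrA (c m + i - 1) \<notin> set as \<Longrightarrow> phi c m i (basis (v,as) :: 'k::field palg) = basis (v,as)"
  unfolding phi_def alg_ext_basis fst_conv snd_conv by (rule img_id[of n]) auto

lemma phi_step_basis:
  assumes "chain n v (pre @ ArrA (c m + i - 1) # post)" "ArrA (c m + i - 1) \<notin> set pre" "ArrA (c m + i - 1) \<notin> set post"
  shows "phi c m i (basis (v, pre @ ArrA (c m + i - 1) # post) :: 'k::field palg) =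
     padd (basis (v, pre @ ArrA (c m + i - 1) # post)) (basis (v, pre @ ArrR (c m + i - 1) # ArrL (c m + i - 1) # post))"
  unfolding phi_def alg_ext_basis fst_conv snd_conv by (rule img_step[OF _ _ assms]) auto

lemma phi_FF:
  assumes "finite I"
  shows "phi c m i (FF c k I :: 'k::field palg) = padd (psum (\<lambda>R. phi c m i (basis (Pk c k R))) I) (phi c m i (A_word c k))"
  unfolding FF_def phi_def
  apply (subst alg_ext_padd)
    apply (rule finite_subset[OF supp_psum]) using assms apply simp
   apply (simp add: A_word_def)
  apply (subst alg_ext_psum) using assms by (auto simp: A_word_def)

lemma A_word_fix:
  assumes "1 \<le> c k" "c k \<le> c (Suc k)" "c (Suc k) \<le> n + 1"
  shows "phi c m i (A_word c k :: 'k::field palg) = A_word c k"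
  unfolding A_word_def
  apply (rule phi_fix_basis[of n])
  using chain_blk[OF assms] apply blast
  unfolding blk_gk using set_gk by fastforce

lemma psum_pow_step:
  assumes "i \<notin> A" "finite A"
  shows "psum (\<lambda>R. padd (b R) (b (insert i R))) (Pow A) = psum b (Pow (insert i A))"
proof (rule ext)
  fix q
  have inj: "inj_on (insert i) (Pow A)"
    unfolding inj_on_def using assms by (metis Diff_insert_absorb PowD subsetD)
  have d: "Pow A \<inter> insert i ` Pow A = {}" using assms by auto
  have "psum b (Pow (insert i A)) q = (\<Sum>R\<in>Pow A. b R q) + (\<Sum>R\<in>insert i ` Pow A. b R q)"
    unfolding psum_def Pow_insert
    by (rule sum.union_disjoint) (use d assms in auto)
  also have "(\<Sum>R\<in>insert i ` Pow A. b R q) = (\<Sum>R\<in>Pow A. b (insert i R) q)"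
    by (simp add: sum.reindex[OF inj])
  finally show "psum (\<lambda>R. padd (b R) (b (insert i R))) (Pow A) q = psum b (Pow (insert i A)) q"
    by (simp add: psum_def padd_def sum.distrib)
qed




lemma phi_step_FF:
  assumes "1 \<le> c k" "c k \<le> c (Suc k)" "c (Suc k) \<le> n + 1" "1 \<le> i" "i \<le> nblk c k"
  shows "phi c k i (FF c k (Pow {1..i-1}) :: 'k::field palg) = FF c k (Pow {1..i})"
proof -
  let ?j = "c k + i - 1"
  have R: "phi c k i (basis (Pk c k R) :: 'k palg) = padd (basis (Pk c k R)) (basis (Pk c k (insert i R)))"
    if "R \<in> Pow {1..i-1}" for R
  proof -
    have iR: "i \<notin> R" using that assms by auto
    define pre where "pre = concat (map (gk c k (\<lambda>m. m\<in>R)) [c k..<c k + i - 1])"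
    define post where "post = concat (map (gk c k (\<lambda>m. m\<in>R)) [c k + i..<c (Suc k)])"
    have e1: "blk_arrows c k (\<lambda>m. m\<in>R) = pre @ ArrA ?j # post"
      using blk_split[OF assms(4,5), of "\<lambda>m. m\<in>R"] iR by (simp add: pre_def post_def)
    have pre2: "concat (map (gk c k (\<lambda>m. m\<in>insert i R)) [c k..<c k + i - 1]) = pre"
      unfolding pre_def by (rule arg_cong[where f=concat], rule map_cong) (auto simp: gk_def)
    have post2: "concat (map (gk c k (\<lambda>m. m\<in>insert i R)) [c k + i..<c (Suc k)]) = post"
      unfolding post_def by (rule arg_cong[where f=concat], rule map_cong) (auto simp: gk_def)
    have e2: "blk_arrows c k (\<lambda>m. m\<in>insert i R) = pre @ ArrR ?j # ArrL ?j # post"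
      using blk_split[OF assms(4,5), of "\<lambda>m. m\<in>insert i R"] pre2 post2 by simp
    have npre: "ArrA ?j \<notin> set pre"
    proof
      assume "ArrA ?j \<in> set pre"
      then show False unfolding pre_def using set_gk by fastforce
    qed
    have npost: "ArrA ?j \<notin> set post"
    proof
      assume "ArrA ?j \<in> set post"
      then show False unfolding post_def using set_gk assms(4) by fastforce
    qed
    have ch: "chain n (VX (c k)) (pre @ ArrA ?j # post)"
      using chain_blk[OF assms(1-3), of "\<lambda>m. m\<in>R"] e1 by simp
    show ?thesis unfolding Pk_def e1 e2 by (rule phi_step_basis[where c=c and m=k and i=i, OF ch npre npost])
  qed
  have "phi c k i (FF c k (Pow {1..i-1}) :: 'k palg)
     = padd (psum (\<lambda>R. padd (basis (Pk c k R)) (basis (Pk c k (insert i R)))) (Pow{1..i-1})) (A_word c k)"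
  proof -
    have pe: "psum (\<lambda>R. phi c k i (basis (Pk c k R) :: 'k palg)) (Pow{1..i-1}) =
       psum (\<lambda>R. padd (basis (Pk c k R)) (basis (Pk c k (insert i R)))) (Pow{1..i-1})"
      unfolding psum_def by (rule ext, rule sum.cong) (simp_all add: R)
    show ?thesis
      apply (subst phi_FF)
       apply simp
      by (simp only: A_word_fix[OF assms(1-3)] pe)
  qed
  also have "\<dots> = FF c k (Pow {1..i})"
  proof -
    have "{1..i} = insert i {1..i-1}" using assms(4) by auto
    moreover have "i \<notin> {1..i-1}" by auto
    ultimately show ?thesis unfolding FF_def
      using psum_pow_step[of i "{1..i-1}" "\<lambda>R. basis (Pk c k R) :: 'k palg"] by simp
  qed
  finally show ?thesis .
qed




lemma fold_fix: "(\<forall>i\<in>set xs. h i X = X) \<Longrightarrow> fold (\<lambda>i g. h i \<circ> g) xs id X = X"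
proof (induction xs rule: rev_induct)
  case Nil then show ?case by simp
next
  case (snoc x xs)
  then show ?case by simp
qed

lemma gamma_blk_k:
  assumes "1 \<le> c k" "c k \<le> c (Suc k)" "c (Suc k) \<le> n + 1"
  shows "m \<le> nblk c k \<Longrightarrow> fold (\<lambda>i g. phi c k i \<circ> g) [1..<Suc m] id (FF c k {{}} :: 'k::field palg) = FF c k (Pow {1..m})"
proof (induction m)
  case 0 then show ?case by simp
next
  case (Suc m)
  have u: "[1..<Suc (Suc m)] = [1..<Suc m] @ [Suc m]" by simp
  have "fold (\<lambda>i g. phi c k i \<circ> g) [1..<Suc (Suc m)] id (FF c k {{}} :: 'k::field palg)
     = phi c k (Suc m) (fold (\<lambda>i g. phi c k i \<circ> g) [1..<Suc m] id (FF c k {{}}))"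
    unfolding u by simp
  also have "\<dots> = phi c k (Suc m) (FF c k (Pow {1..Suc m - 1}))"
  proof -
    have ih: "fold (\<lambda>i g. phi c k i \<circ> g) [1..<Suc m] id (FF c k {{}} :: 'k::field palg) = FF c k (Pow {1..m})"
      by (rule Suc.IH) (use Suc.prems in simp)
    show ?thesis by (simp only: ih diff_Suc_1)
  qed
  also have "\<dots> = FF c k (Pow {1..Suc m})" by (rule phi_step_FF[OF assms]) (use Suc.prems in auto)
  finally show ?case .
qed



lemma gamma_blk_other:
  assumes "finite I" "1 \<le> c k" "c k \<le> c (Suc k)" "c (Suc k) \<le> n + 1"
    and disj: "\<forall>i. 1 \<le> i \<longrightarrow> i \<le> nblk c m \<longrightarrow> (c m + i - 1 < c k \<or> c (Suc k) \<le> c m + i - 1)"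
  shows "gamma_blk c m (FF c k I :: 'k::field palg) = FF c k I"
  unfolding gamma_blk_def
proof (rule fold_fix[where h="phi c m"], rule ballI)
  fix i assume "i \<in> set [1..<Suc (nblk c m)]"
  then have i: "1 \<le> i" "i \<le> nblk c m" by auto
  have "phi c m i (basis (Pk c k R) :: 'k palg) = basis (Pk c k R)" for R
    unfolding Pk_def
  proof (rule phi_fix_basis[of n])
    show "chain n (VX (c k)) (blk_arrows c k (\<lambda>m. m \<in> R))" using chain_blk[OF assms(2-4)] .
    show "ArrA (c m + i - 1) \<notin> set (blk_arrows c k (\<lambda>m. m \<in> R))"
    proof
      assume "ArrA (c m + i - 1) \<in> set (blk_arrows c k (\<lambda>m. m \<in> R))"
      then obtain j' where j': "j' \<in> set [c k..<c (Suc k)]"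
        "ArrA (c m + i - 1) = ArrR j' \<or> ArrA (c m + i - 1) = ArrL j' \<or> (ArrA (c m + i - 1) = ArrA j' \<and> \<not> (j' + 1 - c k \<in> R))"
        unfolding blk_gk by (blast dest: set_gk)
      then have "j' = c m + i - 1" by auto
      then show False using j'(1) disj i by auto
    qed
  qed
  then show "phi c m i (FF c k I :: 'k palg) = FF c k I"
    unfolding phi_FF[OF assms(1)] A_word_fix[OF assms(2-4)] by (simp add: FF_def)
qed



lemma c_mono:
  assumes "\<forall>m\<in>{1..s}. c m < c (Suc m)"
  shows "1 \<le> a \<Longrightarrow> a \<le> b \<Longrightarrow> b \<le> Suc s \<Longrightarrow> c a \<le> (c b :: nat)"
proof (induction b)
  case 0 then show ?case by simp
next
  case (Suc b)
  show ?case
  proof (cases "a = Suc b")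
    case False
    then have "c a \<le> c b" using Suc by simp
    also have "c b < c (Suc b)" using assms Suc.prems False by auto
    finally show ?thesis by simp
  qed simp
qed


lemma gamma_bar_FF:
  assumes "1 \<le> c k" "c k \<le> c (Suc k)" "c (Suc k) \<le> n + 1" "1 \<le> k"
    and disj: "\<forall>m. 1 \<le> m \<longrightarrow> m \<le> s \<longrightarrow> m \<noteq> k \<longrightarrow>
       (\<forall>i. 1 \<le> i \<longrightarrow> i \<le> nblk c m \<longrightarrow> (c m + i - 1 < c k \<or> c (Suc k) \<le> c m + i - 1))"
  shows "t \<le> s \<Longrightarrow> fold (\<lambda>m g. gamma_blk c m \<circ> g) [1..<Suc t] id (FF c k {{}} :: 'k::field palg)
     = FF c k (if t < k then {{}} else Pow {1..nblk c k})"
proof (induction t)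
  case 0 then show ?case using assms(4) by simp
next
  case (Suc t)
  have u: "[1..<Suc (Suc t)] = [1..<Suc t] @ [Suc t]" by simp
  have ih: "fold (\<lambda>m g. gamma_blk c m \<circ> g) [1..<Suc t] id (FF c k {{}} :: 'k::field palg)
     = FF c k (if t < k then {{}} else Pow {1..nblk c k})"
    by (rule Suc.IH) (use Suc.prems in simp)
  have "fold (\<lambda>m g. gamma_blk c m \<circ> g) [1..<Suc (Suc t)] id (FF c k {{}} :: 'k::field palg)
     = gamma_blk c (Suc t) (fold (\<lambda>m g. gamma_blk c m \<circ> g) [1..<Suc t] id (FF c k {{}}))"
    unfolding u by simp
  also have "\<dots> = gamma_blk c (Suc t) (FF c k (if t < k then {{}} else Pow {1..nblk c k}))"
    by (simp only: ih)
  also have "\<dots> = FF c k (if Suc t < k then {{}} else Pow {1..nblk c k})"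
  proof (cases "Suc t = k")
    case True
    then have "t < k" by simp
    then have "gamma_blk c (Suc t) (FF c k (if t < k then {{}} else Pow {1..nblk c k}) :: 'k palg)
       = gamma_blk c k (FF c k {{}})" using True by simp
    also have "\<dots> = FF c k (Pow {1..nblk c k})"
      unfolding gamma_blk_def by (rule gamma_blk_k[OF assms(1-3)]) simp
    finally show ?thesis using True by simp
  next
    case False
    have e: "(if t < k then {{}} else Pow {1..nblk c k}) = (if Suc t < k then {{}} else Pow {1..nblk c k})"
      using False by auto
    show ?thesis unfolding e
      by (rule gamma_blk_other[OF _ assms(1-3)]) (use disj Suc.prems False in auto)
  qed
  finally show ?case .
qed

lemma sum_pow_split:
  fixes b :: "nat set \<Rightarrow> 'k::comm_monoid_add"
  shows "(\<Sum>R\<in>Pow {1..N}. b R) = b {} + ((\<Sum>i\<in>{1..N}. b {i}) + (\<Sum>R\<in>{R \<in> Pow {1..N}. 2 \<le> card R}. b R))"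
proof -
  define S1 where "S1 = (\<lambda>i. {i}) ` {1..N::nat}"
  define S2 where "S2 = {R \<in> Pow {1..N::nat}. 2 \<le> card R}"
  have setsplit: "Pow {1..N} = insert {} (S1 \<union> S2)"
  proof (rule set_eqI, rule iffI)
    fix R assume R: "R \<in> Pow {1..N}"
    then have fR: "finite R" by (meson PowD finite_atLeastAtMost finite_subset)
    show "R \<in> insert {} (S1 \<union> S2)"
    proof (cases "card R")
      case 0 then show ?thesis using fR by simp
    next
      case (Suc m)
      show ?thesis
      proof (cases m)
        case 0
        then obtain x where x: "R = {x}" using Suc card_1_singleton_iff by (metis One_nat_def)
        then have "x \<in> {1..N}" using R by simp
        then show ?thesis unfolding S1_def using x by blast
      next
        case (Suc m') then show ?thesis using R \<open>card R = Suc m\<close> unfolding S2_def by simp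
      qed
    qed
  next
    fix R assume "R \<in> insert {} (S1 \<union> S2)"
    then show "R \<in> Pow {1..N}" unfolding S1_def S2_def by blast
  qed
  have f1: "finite S1" unfolding S1_def by simp
  have f2: "finite S2" unfolding S2_def by (rule finite_subset[of _ "Pow {1..N}"]) auto
  have ne: "{} \<notin> S1 \<union> S2" unfolding S1_def S2_def by auto
  have dj: "S1 \<inter> S2 = {}" unfolding S1_def S2_def by auto
  have inj: "inj_on (\<lambda>i. {i}) {1..N}" by (auto simp: inj_on_def)
  have "(\<Sum>R\<in>Pow {1..N}. b R) = b {} + (\<Sum>R\<in>S1 \<union> S2. b R)"
    unfolding setsplit using f1 f2 ne by (simp add: sum.insert)
  also have "(\<Sum>R\<in>S1 \<union> S2. b R) = (\<Sum>R\<in>S1. b R) + (\<Sum>R\<in>S2. b R)"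
    by (rule sum.union_disjoint[OF f1 f2 dj])
  also have "(\<Sum>R\<in>S1. b R) = (\<Sum>i\<in>{1..N}. b {i})"
    unfolding S1_def using sum.reindex[OF inj, of b] by (simp add: comp_def)
  finally show ?thesis unfolding S2_def .
qed

lemma decomp:
  "FF c k (Pow {1..N}) = (padd (padd (a_word c k) (psum (mixed_word c k) {1..N}))
      (padd (psum (\<lambda>R. basis (Pk c k R)) {R \<in> Pow {1..N}. 2 \<le> card R}) (A_word c k)) :: 'k::field palg)"
proof (rule ext)
  fix q
  have a: "a_word c k = (basis (Pk c k {}) :: 'k palg)" by (simp add: a_word_def Pk_def)
  have m: "mixed_word c k i = (basis (Pk c k {i}) :: 'k palg)" for i by (simp add: mixed_word_def Pk_def)
  show "FF c k (Pow {1..N}) q = (padd (padd (a_word c k) (psum (mixed_word c k) {1..N}))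
      (padd (psum (\<lambda>R. basis (Pk c k R)) {R \<in> Pow {1..N}. 2 \<le> card R}) (A_word c k)) :: 'k::field palg) q"
    unfolding FF_def padd_def psum_def a m sum_pow_split[of "\<lambda>R. basis (Pk c k R) q"]
    by (simp add: add.assoc)
qed

lemma Aword_Pk:
  assumes "c k \<le> c (Suc k)"
  shows "A_word c k = (basis (Pk c k {1..nblk c k}) :: 'k::field palg)"
proof -
  have "blk_arrows c k (\<lambda>i. True) = blk_arrows c k (\<lambda>m. m \<in> {1..nblk c k})"
    unfolding blk_gk
    by (rule arg_cong[where f=concat], rule map_cong) (use assms in \<open>auto simp: gk_def nblk_def\<close>)
  then show ?thesis by (simp add: A_word_def Pk_def)
qed

lemma Pk_props:
  assumes "1 \<le> c k" "c k \<le> c (Suc k)" "c (Suc k) \<le> n + 1" "R \<subseteq> {1..nblk c k}" "2 \<le> card R"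
  shows "valid_path n (Pk c k R) \<and> num_A_factors c k (Pk c k R) \<ge> 2"
proof
  show "valid_path n (Pk c k R)"
    unfolding valid_path_def Pk_def using chain_blk[OF assms(1-3)] assms(1-3) by simp
  have sub: "R \<subseteq> {i \<in> {1..nblk c k}. sublist [ArrR (c k + i - 1), ArrL (c k + i - 1)] (blk_arrows c k (\<lambda>m. m \<in> R))}"
  proof
    fix i assume iR: "i \<in> R"
    then have i: "1 \<le> i" "i \<le> nblk c k" using assms(4) by auto
    show "i \<in> {i \<in> {1..nblk c k}. sublist [ArrR (c k + i - 1), ArrL (c k + i - 1)] (blk_arrows c k (\<lambda>m. m \<in> R))}"
    proof -
      have "sublist [ArrR (c k + i - 1), ArrL (c k + i - 1)] (blk_arrows c k (\<lambda>m. m \<in> R))"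
        by (subst blk_split[OF i]) (simp only: iR if_True sublist_appendI)
      then show ?thesis using i by simp
    qed
  qed
  have "card R \<le> num_A_factors c k (Pk c k R)"
    unfolding num_A_factors_def Pk_def snd_conv by (rule card_mono[OF _ sub]) simp
  then show "num_A_factors c k (Pk c k R) \<ge> 2" using assms(5) by simp
qed

theorem mainTheorem6:
  fixes n s :: nat and c :: "nat \<Rightarrow> nat" and k :: nat
  assumes "n \<ge> 1"
    and "c 1 = 1"
    and "c (Suc s) = n + 1"
    and "\<forall>m\<in>{1..s}. c m < c (Suc m)"
    and "\<forall>m\<in>{1..s}. nblk c m \<ge> 2"
    and "1 \<le> k" and "k \<le> s"
  shows "\<exists>\<Gamma> :: 'f::field palg.
           finite (supp \<Gamma>)
         \<and> (\<forall>p. \<Gamma> p \<noteq> 0 \<longrightarrow> valid_path n p \<and> num_A_factors c k p \<ge> 2)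
         \<and> gamma_bar c s (W c k) =
             padd (padd (a_word c k) (psum (mixed_word c k) {1..nblk c k})) \<Gamma>"
proof -
  note mono = c_mono[OF assms(4)]
  have ck1: "1 \<le> c k" using mono[of 1 k] assms by simp
  have ck2: "c k < c (Suc k)" using assms by auto
  have ck3: "c (Suc k) \<le> n + 1" using mono[of "Suc k" "Suc s"] assms by simp
  have N2: "2 \<le> nblk c k" using assms by auto
  have disj: "\<forall>m. 1 \<le> m \<longrightarrow> m \<le> s \<longrightarrow> m \<noteq> k \<longrightarrow>
       (\<forall>i. 1 \<le> i \<longrightarrow> i \<le> nblk c m \<longrightarrow> (c m + i - 1 < c k \<or> c (Suc k) \<le> c m + i - 1))"
  proof (intro allI impI)
    fix m i assume m: "1 \<le> m" "m \<le> s" "m \<noteq> k" and i: "1 \<le> i" "i \<le> nblk c m"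
    show "c m + i - 1 < c k \<or> c (Suc k) \<le> c m + i - 1"
    proof (cases "m < k")
      case True
      have "c (Suc m) \<le> c k" using mono[of "Suc m" k] True assms by simp
      moreover have "c m + i - 1 < c (Suc m)" using i by (simp add: nblk_def)
      ultimately show ?thesis by simp
    next
      case False
      then have "c (Suc k) \<le> c m" using mono[of "Suc k" m] m by simp
      then show ?thesis using i by linarith
    qed
  qed
  have W: "W c k = (FF c k {{}} :: 'f palg)"
    by (rule ext) (simp add: W_def FF_def psum_def a_word_def Pk_def)
  have G: "gamma_bar c s (W c k) = (FF c k (Pow {1..nblk c k}) :: 'f palg)"
    unfolding W gamma_bar_def
    using gamma_bar_FF[OF ck1 less_imp_le[OF ck2] ck3 assms(6) disj, of s] assms(7) by simp
  define \<Gamma> where "\<Gamma> = (padd (psum (\<lambda>R. basis (Pk c k R)) {R \<in> Pow {1..nblk c k}. 2 \<le> card R}) (A_word c k) :: 'f palg)"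
  have nz: "\<exists>R. R \<subseteq> {1..nblk c k} \<and> 2 \<le> card R \<and> p = Pk c k R" if "\<Gamma> p \<noteq> 0" for p
  proof -
    have "psum (\<lambda>R. basis (Pk c k R)) {R \<in> Pow {1..nblk c k}. 2 \<le> card R} p \<noteq> (0::'f) \<or> A_word c k p \<noteq> (0::'f)"
      using that by (auto simp: \<Gamma>_def padd_def)
    then show ?thesis
    proof
      assume "psum (\<lambda>R. basis (Pk c k R)) {R \<in> Pow {1..nblk c k}. 2 \<le> card R} p \<noteq> (0::'f)"
      then obtain R where "R \<in> {R \<in> Pow {1..nblk c k}. 2 \<le> card R}" "(basis (Pk c k R) p :: 'f) \<noteq> 0"
        unfolding psum_def by (meson sum.neutral)
      then show ?thesis by (auto simp: basis_def split: if_splits)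
    next
      assume "A_word c k p \<noteq> (0::'f)"
      then have "p = Pk c k {1..nblk c k}"
        unfolding Aword_Pk[OF less_imp_le[OF ck2]] by (auto simp: basis_def split: if_splits)
      then show ?thesis using N2 by auto
    qed
  qed
  show ?thesis
  proof (intro exI conjI allI impI)
    show "finite (supp \<Gamma>)"
    proof (rule finite_subset)
      show "supp \<Gamma> \<subseteq> Pk c k ` Pow {1..nblk c k}" using nz unfolding supp_def by blast
    qed simp
  next
    fix p assume "\<Gamma> p \<noteq> 0"
    then obtain R where "R \<subseteq> {1..nblk c k}" "2 \<le> card R" "p = Pk c k R" using nz by blast
    then show "valid_path n p" "num_A_factors c k p \<ge> 2"
      using Pk_props[OF ck1 less_imp_le[OF ck2] ck3] by auto
  next
    show "gamma_bar c s (W c k) = padd (padd (a_word c k) (psum (mixed_word c k) {1..nblk c k})) \<Gamma>"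
      unfolding G \<Gamma>_def by (rule decomp)
  qed
qed

end
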